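(* Let $A\in\mathbb C^{m\times n}$ with $m<n$ have full rank. For every $1\le q\le\infty$, $A^\dagger\in\mathrm{ginv}_{\mathrm{col}(2,q)}(A)$ and $A^\dagger\in\mathrm{pginv}_{\mathrm{col}(2,q)}(A)$. For $1\le q<\infty$ both sets equal $\{A^\dagger\}$. For $q=\infty$ they need not be singletons: there exist full-rank $A$ for which $\mathrm{ginv}_{\mathrm{col}(2,\infty)}(A)$ contains elements other than $A^\dagger$ (e.g. $A=\begin{bmatrix}\eta^{-1}&0&0\\0&1&0\end{bmatrix}$ with $0<\eta<1$), and full-rank $A$ for which $\mathrm{pginv}_{\mathrm{col}(2,\infty)}(A)$ contains elements other than $A^\dagger$.
   Context: For $M$ with columns $m_j$: $\|M\|_{\mathrm{col}(p,q)}=(\sum_j\|m_j\|_p^q)^{1/q}$ (maximum over $j$ for $q=\infty$). $\mathcal G(A)=\{X:AX=I_m\}$; $\mathrm{ginv}_\nu(A)=\arg\min_{X\in\mathcal G(A)}\|X\|_\nu$, $\mathrm{pginv}_\nu(A)=\arg\min_{X\in\mathcal G(A)}\|XA\|_\nu$ (sets). $A^\dagger=A^H(AA^H)^{-1}$. *)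

theory Defs
  imports "Jordan_Normal_Form.DL_Rank" "HOL-Library.Extended_Real"
begin

definition adj :: "complex mat \<Rightarrow> complex mat" where
  "adj A = mat (dim_col A) (dim_row A) (\<lambda>(i,j). cnj (A $$ (j,i)))"

definition col_norm2 :: "complex mat \<Rightarrow> nat \<Rightarrow> real" where
  "col_norm2 M j = sqrt (\<Sum>i<dim_row M. (cmod (M $$ (i,j)))\<^sup>2)"

text \<open>Mixed column norm col(2,q), q in [1,infinity]; for q = infinity the maximum
  over the columns (0 for a matrix without columns).\<close>
definition colnorm :: "ereal \<Rightarrow> complex mat \<Rightarrow> real" where
  "colnorm q M = (if q = \<infinity> then Max (insert 0 ((col_norm2 M) ` {..<dim_col M}))
                 else (\<Sum>j<dim_col M. col_norm2 M j powr real_of_ereal q) powr (1 / real_of_ereal q))"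

definition ginvs :: "complex mat \<Rightarrow> complex mat set" where
  "ginvs A = {X. X \<in> carrier_mat (dim_col A) (dim_row A) \<and> A * X = 1\<^sub>m (dim_row A)}"

definition ginv :: "ereal \<Rightarrow> complex mat \<Rightarrow> complex mat set" where
  "ginv q A = {X \<in> ginvs A. \<forall>Y \<in> ginvs A. colnorm q X \<le> colnorm q Y}"

definition pginv :: "ereal \<Rightarrow> complex mat \<Rightarrow> complex mat set" where
  "pginv q A = {X \<in> ginvs A. \<forall>Y \<in> ginvs A. colnorm q (X * A) \<le> colnorm q (Y * A)}"

text \<open>Moore-Penrose pseudoinverse A^H (A A^H)^{-1} (for full row rank A).\<close>
definition pinv :: "complex mat \<Rightarrow> complex mat" where
  "pinv A = adj A * (THE B. B \<in> carrier_mat (dim_row A) (dim_row A) \<and>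
        A * adj A * B = 1\<^sub>m (dim_row A) \<and> B * (A * adj A) = 1\<^sub>m (dim_row A))"

definition full_row_rank :: "complex mat \<Rightarrow> bool" where
  "full_row_rank A = (vec_space.rank (dim_row A) A = dim_row A)"

end

theory Submission
  imports Defs
begin


context vec_space begin
lemma rank_full_span:
  assumes A: "A \<in> carrier_mat n nc" and r: "rank A = n"
  shows "span (set (cols A)) = carrier_vec n"
proof -
  obtain S where S: "finite S" "maximal S (\<lambda>T. T \<subseteq> set (cols A) \<and> lin_indpt T)"
    using maximal_exists_superset[of "set (cols A)" "(\<lambda>T. T \<subseteq> set (cols A) \<and> lin_indpt T)" "{}"]
    by (auto simp: lin_dep_def)
  have cS: "card S = n" using rank_card_indpt[OF A S(2)] r by simp
  have Ssub: "S \<subseteq> set (cols A)" "lin_indpt S" using S(2) unfolding maximal_def by auto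
  have colsc: "set (cols A) \<subseteq> carrier_vec n" using A cols_dim by blast
  have "basis S"
    by (rule dim_li_is_basis, insert S(1) Ssub colsc cS dim_is_n, auto)
  then have "span S = carrier_vec n" unfolding basis_def by auto
  moreover have "span S \<subseteq> span (set (cols A))" using span_is_monotone Ssub by metis
  moreover have "span (set (cols A)) \<subseteq> carrier_vec n" using colsc span_is_subset2 by auto
  ultimately show ?thesis by auto
qed

lemma rank_full_solve:
  assumes A: "A \<in> carrier_mat n nc" and r: "rank A = n" and y: "y \<in> carrier_vec n"
  shows "\<exists>x\<in>carrier_vec nc. A *\<^sub>v x = y"
  using rank_full_span[OF A r] col_space_eq[OF A] y A unfolding col_space_def by auto

lemma solve_rank_full:
  assumes A: "A \<in> carrier_mat n nc" and s: "\<And>y. y \<in> carrier_vec n \<Longrightarrow> \<exists>x\<in>carrier_vec nc. A *\<^sub>v x = y"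
  shows "rank A = n"
proof -
  have "span (set (cols A)) = carrier_vec n"
    using col_space_eq[OF A] s A unfolding col_space_def by auto
  then have "span_vs (set (cols A)) = V" by simp
  then show ?thesis unfolding rank_def using dim_is_n by simp
qed
end




lemma adj_carrier[simp]: "A \<in> carrier_mat m n \<Longrightarrow> adj A \<in> carrier_mat n m"
  by (auto simp: adj_def)
lemma adj_dims[simp]: "dim_row (adj A) = dim_col A" "dim_col (adj A) = dim_row A"
  by (auto simp: adj_def)
lemma adj_index[simp]: "i < dim_col A \<Longrightarrow> j < dim_row A \<Longrightarrow> adj A $$ (i,j) = cnj (A $$ (j,i))"
  by (auto simp: adj_def)

lemma adj_mult:
  assumes A: "A \<in> carrier_mat m n" and B: "B \<in> carrier_mat n p"
  shows "adj (A * B) = adj B * adj A"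
proof (rule eq_matI)
  fix i j assume i: "i < dim_row (adj B * adj A)" and j: "j < dim_col (adj B * adj A)"
  have i': "i < p" and j': "j < m" using i j A B by auto
  show "adj (A * B) $$ (i, j) = (adj B * adj A) $$ (i, j)"
    using A B i' j' by (auto simp: scalar_prod_def cnj_sum mult.commute intro!: sum.cong)
qed (insert A B, auto)

definition ip :: "complex vec \<Rightarrow> complex vec \<Rightarrow> complex" where
  "ip v w = (\<Sum>i<dim_vec v. cnj (v $ i) * w $ i)"

definition vn :: "complex vec \<Rightarrow> real" where
  "vn v = (\<Sum>i<dim_vec v. (cmod (v $ i))\<^sup>2)"

lemma adj_ip:
  assumes M: "M \<in> carrier_mat m n" and w: "w \<in> carrier_vec m" and u: "u \<in> carrier_vec n"
  shows "ip w (M *\<^sub>v u) = ip (adj M *\<^sub>v w) u"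
proof -
  have "ip w (M *\<^sub>v u) = (\<Sum>k<m. cnj (w $ k) * (\<Sum>i<n. M $$ (k,i) * u $ i))"
    using M w u by (auto simp: ip_def scalar_prod_def atLeast0LessThan intro!: sum.cong)
  also have "\<dots> = (\<Sum>k<m. \<Sum>i<n. cnj (w $ k) * M $$ (k,i) * u $ i)"
    by (simp add: sum_distrib_left mult.assoc)
  also have "\<dots> = (\<Sum>i<n. \<Sum>k<m. cnj (w $ k) * M $$ (k,i) * u $ i)"
    by (rule sum.swap)
  also have "\<dots> = (\<Sum>i<n. cnj (\<Sum>k<m. cnj (M $$ (k,i)) * w $ k) * u $ i)"
    by (auto simp: cnj_sum sum_distrib_right intro!: sum.cong)
  also have "\<dots> = ip (adj M *\<^sub>v w) u"
    using M w u by (auto simp: ip_def scalar_prod_def atLeast0LessThan intro!: sum.cong)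
  finally show ?thesis .
qed

lemma cmod_sq_add: "(cmod (a + b))\<^sup>2 = (cmod a)\<^sup>2 + (cmod b)\<^sup>2 + 2 * Re (cnj a * b)"
  unfolding cmod_power2 by (simp add: power2_eq_square algebra_simps)

lemma vn_add:
  assumes a: "a \<in> carrier_vec n" and b: "b \<in> carrier_vec n"
  shows "vn (a + b) = vn a + vn b + 2 * Re (ip a b)"
proof -
  have "vn (a + b) = (\<Sum>i<n. (cmod (a $ i + b $ i))\<^sup>2)" using a b by (simp add: vn_def)
  also have "\<dots> = (\<Sum>i<n. (cmod (a $ i))\<^sup>2 + (cmod (b $ i))\<^sup>2 + 2 * Re (cnj (a $ i) * b $ i))"
    by (simp add: cmod_sq_add)
  also have "\<dots> = vn a + vn b + 2 * Re (ip a b)"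
    using a b by (simp add: vn_def ip_def sum.distrib Re_sum sum_distrib_left)
  finally show ?thesis .
qed

lemma vn_ip: "vn a = Re (ip a a)"
  unfolding vn_def ip_def cmod_power2 by (simp add: Re_sum power2_eq_square sum.distrib)

lemma vn_nonneg: "vn a \<ge> 0" by (simp add: vn_def sum_nonneg)

lemma vn_zero: assumes a: "a \<in> carrier_vec n" and z: "vn a = 0" shows "a = 0\<^sub>v n"
proof (rule eq_vecI)
  fix i assume "i < dim_vec (0\<^sub>v n)"
  then have i: "i < dim_vec a" using a by auto
  have "(cmod (a $ i))\<^sup>2 = 0"
    using z unfolding vn_def by (subst (asm) sum_nonneg_eq_0_iff) (use i in auto)
  then show "a $ i = 0\<^sub>v n $ i" using i a by auto
qed (use a in auto)

lemma AAH_det: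
  assumes A: "A \<in> carrier_mat m n" and R: "R \<in> carrier_mat n m" and AR: "A * R = 1\<^sub>m m"
  shows "det (A * adj A) \<noteq> 0"
proof
  assume "det (A * adj A) = 0"
  then obtain v where v: "v \<in> carrier_vec m" "v \<noteq> 0\<^sub>v m" "(A * adj A) *\<^sub>v v = 0\<^sub>v m"
    using det_0_iff_vec_prod_zero_field[of "A * adj A" m] A by auto
  define u where "u = adj A *\<^sub>v v"
  have u: "u \<in> carrier_vec n" using A v unfolding u_def by (metis adj_carrier mult_mat_vec_carrier)
  have Au: "A *\<^sub>v u = 0\<^sub>v m" using v A unfolding u_def
    by (simp add: assoc_mult_mat_vec[symmetric, of A m n "adj A" m v])
  have "vn u = Re (ip u u)" by (rule vn_ip)
  also have "ip u u = ip v (A *\<^sub>v u)" using adj_ip[OF A v(1) u] unfolding u_def by simp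
  also have "\<dots> = 0" using Au v by (simp add: ip_def)
  finally have "u = 0\<^sub>v n" using vn_zero[OF u] by simp
  have adj1: "adj (1\<^sub>m m) = (1\<^sub>m m :: complex mat)"
    by (rule eq_matI) (auto simp: adj_def)
  have "v = adj (A * R) *\<^sub>v v" using AR v adj1 by simp
  also have "\<dots> = adj R *\<^sub>v u" unfolding u_def adj_mult[OF A R]
    using A R v by (simp add: assoc_mult_mat_vec[of _ m n _ m v])
  also have "\<dots> = 0\<^sub>v m" using \<open>u = 0\<^sub>v n\<close> R by (intro eq_vecI) (auto simp: scalar_prod_def)
  finally show False using v(2) by simp
qed



lemma right_inv_exists:
  assumes A: "A \<in> carrier_mat m n" and r: "full_row_rank A"
  shows "\<exists>R \<in> carrier_mat n m. A * R = 1\<^sub>m m"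
proof -
  have rk: "vec_space.rank m A = m" using r A unfolding full_row_rank_def by simp
  have "\<forall>j<m. \<exists>x\<in>carrier_vec n. A *\<^sub>v x = unit_vec m j"
    using vec_space.rank_full_solve[OF A rk] by auto
  then obtain xs where xs: "\<And>j. j < m \<Longrightarrow> xs j \<in> carrier_vec n \<and> A *\<^sub>v xs j = unit_vec m j"
    by metis
  define R where "R = mat n m (\<lambda>(i,j). xs j $ i)"
  have colR: "col R j = xs j" if j: "j < m" for j
    using xs[OF j] j unfolding R_def by (intro eq_vecI) auto
  have "A * R = 1\<^sub>m m"
  proof (rule eq_matI)
    fix i j assume i: "i < dim_row (1\<^sub>m m)" and j: "j < dim_col (1\<^sub>m m)"
    have "(A * R) $$ (i,j) = row A i \<bullet> col R j" using i j A unfolding R_def by simp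
    also have "\<dots> = (A *\<^sub>v xs j) $ i" using colR[of j] i j A by simp
    also have "\<dots> = 1\<^sub>m m $$ (i,j)" using xs[of j] i j by simp
    finally show "(A * R) $$ (i,j) = 1\<^sub>m m $$ (i,j)" .
  qed (insert A, auto simp: R_def)
  then show ?thesis unfolding R_def by auto
qed

lemma full_rank_from_right_inv:
  assumes A: "A \<in> carrier_mat m n" and R: "R \<in> carrier_mat n m" and AR: "A * R = 1\<^sub>m m"
  shows "full_row_rank A"
proof -
  have "vec_space.rank m A = m"
  proof (rule vec_space.solve_rank_full[OF A])
    fix y :: "complex vec" assume y: "y \<in> carrier_vec m"
    have "A *\<^sub>v (R *\<^sub>v y) = y" using A R y AR
      by (metis assoc_mult_mat_vec one_mult_mat_vec)
    then show "\<exists>x\<in>carrier_vec n. A *\<^sub>v x = y" using R y by (intro bexI[of _ "R *\<^sub>v y"]) auto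
  qed
  then show ?thesis using A unfolding full_row_rank_def by simp
qed

lemma AAH_inv:
  assumes A: "A \<in> carrier_mat m n" and R: "R \<in> carrier_mat n m" and AR: "A * R = 1\<^sub>m m"
  shows "\<exists>B \<in> carrier_mat m m. A * adj A * B = 1\<^sub>m m \<and> B * (A * adj A) = 1\<^sub>m m"
proof -
  have M: "A * adj A \<in> carrier_mat m m" using A by simp
  from det_non_zero_imp_unit[OF M AAH_det[OF A R AR], of "()"]
  show ?thesis unfolding Units_def ring_mat_def by auto
qed

lemma pinv_char:
  assumes A: "A \<in> carrier_mat m n" and r: "full_row_rank A"
  shows "\<exists>B \<in> carrier_mat m m. pinv A = adj A * B \<and> A * adj A * B = 1\<^sub>m m \<and> B * (A * adj A) = 1\<^sub>m m"
proof -
  obtain R where R: "R \<in> carrier_mat n m" "A * R = 1\<^sub>m m" using right_inv_exists[OF A r] by auto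
  obtain B where B: "B \<in> carrier_mat m m" "A * adj A * B = 1\<^sub>m m" "B * (A * adj A) = 1\<^sub>m m"
    using AAH_inv[OF A R] by auto
  have M: "A * adj A \<in> carrier_mat m m" using A by simp
  have uniq: "B' = B" if B': "B' \<in> carrier_mat m m" "A * adj A * B' = 1\<^sub>m m" for B'
  proof -
    have "B' = (B * (A * adj A)) * B'" using B' B by (simp only: B(3) left_mult_one_mat)
    also have "\<dots> = B * (A * adj A * B')" by (rule assoc_mult_mat[OF B(1) M B'(1)])
    also have "\<dots> = B * 1\<^sub>m m" by (simp only: B'(2))
    also have "\<dots> = B" using B(1) by simp
    finally show ?thesis .
  qed
  have "(THE B'. B' \<in> carrier_mat (dim_row A) (dim_row A) \<and>
        A * adj A * B' = 1\<^sub>m (dim_row A) \<and> B' * (A * adj A) = 1\<^sub>m (dim_row A)) = B"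
  proof (rule the_equality)
    show "B \<in> carrier_mat (dim_row A) (dim_row A) \<and>
        A * adj A * B = 1\<^sub>m (dim_row A) \<and> B * (A * adj A) = 1\<^sub>m (dim_row A)" using A B by simp
  next
    fix B' assume "B' \<in> carrier_mat (dim_row A) (dim_row A) \<and>
        A * adj A * B' = 1\<^sub>m (dim_row A) \<and> B' * (A * adj A) = 1\<^sub>m (dim_row A)"
    then show "B' = B" using A uniq[of B'] by simp
  qed
  then show ?thesis using B unfolding pinv_def by auto
qed




lemma col_norm2_nonneg: "col_norm2 M j \<ge> 0" by (simp add: col_norm2_def sum_nonneg)

lemma powr_inj_nonneg:
  assumes "(a::real) \<ge> 0" "b \<ge> 0" "r > 0" "a powr r = b powr r" shows "a = b"
proof -
  have "(a powr r) powr (1/r) = (b powr r) powr (1/r)" using assms by simp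
  then show ?thesis using assms(1-3) by (simp add: powr_powr)
qed

lemma powr_le_cancel_base:
  assumes "(a::real) \<ge> 0" "b \<ge> 0" "r > 0" "a powr r \<le> b powr r" shows "a \<le> b"
proof -
  have "(a powr r) powr (1/r) \<le> (b powr r) powr (1/r)" using assms by (rule_tac powr_mono2) auto
  then show ?thesis using assms(1-3) by (simp add: powr_powr)
qed

lemma pm: "0 \<le> (a::real) \<Longrightarrow> a \<le> b \<Longrightarrow> 0 \<le> r \<Longrightarrow> a powr r \<le> b powr r"
  by (rule powr_mono2)

lemma colnorm_mono:
  assumes q: "1 \<le> q" and d: "dim_col M' = dim_col M"
    and le: "\<And>j. j < dim_col M \<Longrightarrow> col_norm2 M j \<le> col_norm2 M' j"
  shows "colnorm q M \<le> colnorm q M'"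
proof (cases "q = \<infinity>")
  case True
  have "Max (insert 0 (col_norm2 M ` {..<dim_col M})) \<le> Max (insert 0 (col_norm2 M' ` {..<dim_col M'}))"
  proof (subst Max_le_iff, simp, simp, intro ballI)
    fix x assume "x \<in> insert 0 (col_norm2 M ` {..<dim_col M})"
    then consider "x = 0" | j where "j < dim_col M" "x = col_norm2 M j" by auto
    then show "x \<le> Max (insert 0 (col_norm2 M' ` {..<dim_col M'}))"
    proof cases
      case 1 then show ?thesis by (intro Max_ge) auto
    next
      case 2
      then have "x \<le> col_norm2 M' j" using le by simp
      also have "\<dots> \<le> Max (insert 0 (col_norm2 M' ` {..<dim_col M'}))" using 2 d by (intro Max_ge) auto
      finally show ?thesis .
    qed
  qed
  then show ?thesis using True unfolding colnorm_def by simp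
next
  case False
  then obtain r where r: "q = ereal r" using q by (cases q) auto
  have r1: "r \<ge> 1" using q r by simp
  have "(\<Sum>j<dim_col M. col_norm2 M j powr r) \<le> (\<Sum>j<dim_col M'. col_norm2 M' j powr r)"
    unfolding d using le r1 by (intro sum_mono pm) (auto simp: col_norm2_nonneg)
  then have "(\<Sum>j<dim_col M. col_norm2 M j powr r) powr (1/r) \<le> (\<Sum>j<dim_col M'. col_norm2 M' j powr r) powr (1/r)"
    using r1 by (rule_tac pm) (auto intro!: sum_nonneg)
  then show ?thesis using False r unfolding colnorm_def by simp
qed

lemma colnorm_eq:
  assumes q: "1 \<le> q" "q \<noteq> \<infinity>" and d: "dim_col M' = dim_col M"
    and le: "\<And>j. j < dim_col M \<Longrightarrow> col_norm2 M j \<le> col_norm2 M' j"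
    and ge: "colnorm q M' \<le> colnorm q M"
  shows "\<And>j. j < dim_col M \<Longrightarrow> col_norm2 M' j = col_norm2 M j"
proof -
  obtain r where r: "q = ereal r" using q by (cases q) auto
  have r1: "r \<ge> 1" using q r by simp
  define S where "S = (\<Sum>j<dim_col M. col_norm2 M j powr r)"
  define S' where "S' = (\<Sum>j<dim_col M. col_norm2 M' j powr r)"
  have pp: "S' powr (1/r) \<le> S powr (1/r)" using ge q r d unfolding colnorm_def S_def S'_def by simp
  have SS: "S' \<le> S"
  proof (rule powr_le_cancel_base[of S' S "1/r"])
    show "0 \<le> S'" unfolding S'_def by (rule sum_nonneg) simp
    show "0 \<le> S" unfolding S_def by (rule sum_nonneg) simp
    show "0 < 1/r" using r1 by simp
  qed (rule pp)
  have nn: "\<And>j. j < dim_col M \<Longrightarrow> 0 \<le> col_norm2 M' j powr r - col_norm2 M j powr r"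
  proof -
    fix j assume j: "j < dim_col M"
    have "col_norm2 M j powr r \<le> col_norm2 M' j powr r"
      by (rule pm[OF col_norm2_nonneg le[OF j]]) (use r1 in simp)
    then show "0 \<le> col_norm2 M' j powr r - col_norm2 M j powr r" by simp
  qed
  have "(\<Sum>j<dim_col M. col_norm2 M' j powr r - col_norm2 M j powr r) = S' - S"
    unfolding S_def S'_def by (simp add: sum_subtractf)
  also have "\<dots> \<le> 0" using SS by simp
  finally have s0: "(\<Sum>j<dim_col M. col_norm2 M' j powr r - col_norm2 M j powr r) \<le> 0" .
  have s1: "0 \<le> (\<Sum>j<dim_col M. col_norm2 M' j powr r - col_norm2 M j powr r)"
    by (rule sum_nonneg) (use nn in simp)
  have z: "\<forall>j\<in>{..<dim_col M}. col_norm2 M' j powr r - col_norm2 M j powr r = 0"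
    using sum_nonneg_eq_0_iff[of "{..<dim_col M}" "\<lambda>j. col_norm2 M' j powr r - col_norm2 M j powr r"] nn s0 s1
    by auto
  fix j assume j: "j < dim_col M"
  have e: "col_norm2 M' j powr r = col_norm2 M j powr r" using z j by auto
  show "col_norm2 M' j = col_norm2 M j"
    by (rule powr_inj_nonneg[OF col_norm2_nonneg col_norm2_nonneg _ e]) (use r1 in simp)
qed

lemma colnorm_inf_ge: "j < dim_col M \<Longrightarrow> col_norm2 M j \<le> colnorm \<infinity> M"
  unfolding colnorm_def by (auto intro!: Max_ge)

lemma colnorm_inf_le: "c \<ge> 0 \<Longrightarrow> (\<And>j. j < dim_col M \<Longrightarrow> col_norm2 M j \<le> c) \<Longrightarrow> colnorm \<infinity> M \<le> c"
  unfolding colnorm_def by (simp add: Max_le_iff)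

lemma col_norm2_ge_entry:
  assumes "i < dim_row M" shows "cmod (M $$ (i,j)) \<le> col_norm2 M j"
proof -
  have "(cmod (M $$ (i,j)))\<^sup>2 \<le> (\<Sum>i<dim_row M. (cmod (M $$ (i,j)))\<^sup>2)"
    using assms by (intro member_le_sum) auto
  then show ?thesis unfolding col_norm2_def by (rule real_le_rsqrt)
qed




lemma pinv_basic:
  assumes A: "A \<in> carrier_mat m n" and r: "full_row_rank A"
  shows "pinv A \<in> carrier_mat n m" "A * pinv A = 1\<^sub>m m"
proof -
  obtain B where B: "B \<in> carrier_mat m m" "pinv A = adj A * B" "A * adj A * B = 1\<^sub>m m"
    using pinv_char[OF A r] by auto
  show "pinv A \<in> carrier_mat n m" unfolding B(2) by (rule mult_carrier_mat[OF adj_carrier[OF A] B(1)])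
  have "A * pinv A = A * adj A * B" unfolding B(2) using A B
    by (rule_tac assoc_mult_mat[symmetric]) auto
  then show "A * pinv A = 1\<^sub>m m" using B by simp
qed

lemma pyth:
  assumes A: "A \<in> carrier_mat m n" and r: "full_row_rank A"
    and X: "X \<in> carrier_mat n m" and AX: "A * X = 1\<^sub>m m" and v: "v \<in> carrier_vec m"
  shows "vn (X *\<^sub>v v) = vn (pinv A *\<^sub>v v) + vn ((X - pinv A) *\<^sub>v v)"
proof -
  obtain B where B: "B \<in> carrier_mat m m" "pinv A = adj A * B" "A * adj A * B = 1\<^sub>m m"
    using pinv_char[OF A r] by auto
  note P = pinv_basic[OF A r]
  define N where "N = X - pinv A"
  have N: "N \<in> carrier_mat n m" unfolding N_def by (rule minus_carrier_mat[OF P(1)])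
  have AN: "A * N = 0\<^sub>m m m"
    unfolding N_def using mult_minus_distrib_mat[OF A X P(1)] AX P(2) by simp
  have Nv: "N *\<^sub>v v = X *\<^sub>v v - pinv A *\<^sub>v v"
    unfolding N_def by (rule minus_mult_distrib_mat_vec[OF X P(1) v])
  have Xv: "X *\<^sub>v v = pinv A *\<^sub>v v + N *\<^sub>v v"
    unfolding Nv using X P(1) v by (intro eq_vecI) auto
  define w where "w = B *\<^sub>v v"
  have w: "w \<in> carrier_vec m" using B v unfolding w_def by simp
  have Pv: "pinv A *\<^sub>v v = adj A *\<^sub>v w" unfolding B(2) w_def by (rule assoc_mult_mat_vec[OF adj_carrier[OF A] B(1) v])
  have Nvc: "N *\<^sub>v v \<in> carrier_vec n" using N v by simp
  have ANv: "A *\<^sub>v (N *\<^sub>v v) = 0\<^sub>v m"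
  proof -
    have "A *\<^sub>v (N *\<^sub>v v) = (A * N) *\<^sub>v v" using A N v by simp
    also have "\<dots> = 0\<^sub>v m" unfolding AN using v by (intro eq_vecI) (auto simp: scalar_prod_def)
    finally show ?thesis .
  qed
  have "ip (pinv A *\<^sub>v v) (N *\<^sub>v v) = ip w (A *\<^sub>v (N *\<^sub>v v))"
    unfolding Pv using adj_ip[OF A w Nvc] by simp
  also have "\<dots> = 0" unfolding ANv using w by (simp add: ip_def)
  finally have ip0: "ip (pinv A *\<^sub>v v) (N *\<^sub>v v) = 0" .
  have "vn (X *\<^sub>v v) = vn (pinv A *\<^sub>v v) + vn (N *\<^sub>v v) + 2 * Re (ip (pinv A *\<^sub>v v) (N *\<^sub>v v))"
    unfolding Xv by (rule vn_add[of _ n]) (use P v Nvc in auto)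
  then show ?thesis using ip0 unfolding N_def by simp
qed

lemma col_norm2_vn: "j < dim_col M \<Longrightarrow> col_norm2 M j = sqrt (vn (col M j))"
  unfolding col_norm2_def vn_def by simp

lemma colcmp:
  assumes A: "A \<in> carrier_mat m n" and r: "full_row_rank A"
    and X: "X \<in> carrier_mat n m" and AX: "A * X = 1\<^sub>m m" and C: "C \<in> carrier_mat m p" and j: "j < p"
  shows "col_norm2 (X * C) j = sqrt ((col_norm2 (pinv A * C) j)\<^sup>2 + vn ((X - pinv A) *\<^sub>v col C j))"
proof -
  note P = pinv_basic[OF A r]
  have cC: "col C j \<in> carrier_vec m" using C j by simp
  have "col_norm2 (X * C) j = sqrt (vn (col (X * C) j))"
    using X C j by (intro col_norm2_vn) simp
  also have "col (X * C) j = X *\<^sub>v col C j" by (rule col_mult2[OF X C j])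
  finally have 1: "col_norm2 (X * C) j = sqrt (vn (X *\<^sub>v col C j))" .
  have "col_norm2 (pinv A * C) j = sqrt (vn (col (pinv A * C) j))"
    using P C j by (intro col_norm2_vn) simp
  also have "col (pinv A * C) j = pinv A *\<^sub>v col C j" by (rule col_mult2[OF P(1) C j])
  finally have 2: "col_norm2 (pinv A * C) j = sqrt (vn (pinv A *\<^sub>v col C j))" .
  note 1 2
  show ?thesis using 1 2 pyth[OF A r X AX cC] by (simp add: vn_nonneg)
qed




lemma part1_C:
  assumes A: "A \<in> carrier_mat m n" and r: "full_row_rank A" and C: "C \<in> carrier_mat m p"
    and q: "1 \<le> q" and X: "X \<in> carrier_mat n m" and AX: "A * X = 1\<^sub>m m"
  shows "colnorm q (pinv A * C) \<le> colnorm q (X * C)"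
    and "q \<noteq> \<infinity> \<Longrightarrow> colnorm q (X * C) \<le> colnorm q (pinv A * C) \<Longrightarrow> (X - pinv A) * C = 0\<^sub>m n p"
proof -
  note P = pinv_basic[OF A r]
  have dPC: "dim_col (pinv A * C) = p" "dim_col (X * C) = p" using C by auto
  have le: "col_norm2 (pinv A * C) j \<le> col_norm2 (X * C) j" if j: "j < dim_col (pinv A * C)" for j
  proof -
    have j': "j < p" using j dPC by simp
    show ?thesis unfolding colcmp[OF A r X AX C j'] by (rule real_le_rsqrt) (simp add: vn_nonneg)
  qed
  show "colnorm q (pinv A * C) \<le> colnorm q (X * C)"
    by (rule colnorm_mono[OF q _ le]) (use dPC in simp)
  assume qi: "q \<noteq> \<infinity>" and ge: "colnorm q (X * C) \<le> colnorm q (pinv A * C)"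
  have eqs: "col_norm2 (X * C) j = col_norm2 (pinv A * C) j" if j: "j < dim_col (pinv A * C)" for j
    by (rule colnorm_eq[OF q qi _ le ge j]) (use dPC in simp)
  have zero: "(X - pinv A) *\<^sub>v col C j = 0\<^sub>v n" if j: "j < p" for j
  proof -
    have cC: "col C j \<in> carrier_vec m" using C j by simp
    have XP: "X - pinv A \<in> carrier_mat n m" by (rule minus_carrier_mat[OF P(1)])
    let ?c = "col_norm2 (pinv A * C) j"
    have "sqrt (?c\<^sup>2 + vn ((X - pinv A) *\<^sub>v col C j)) = ?c"
      using eqs[of j] j dPC colcmp[OF A r X AX C j] by simp
    then have "?c\<^sup>2 + vn ((X - pinv A) *\<^sub>v col C j) = ?c\<^sup>2"
      by (metis col_norm2_nonneg real_sqrt_abs real_sqrt_eq_iff abs_of_nonneg)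
    then have "vn ((X - pinv A) *\<^sub>v col C j) = 0" by simp
    then show ?thesis by (rule vn_zero[rotated]) (use XP cC in simp)
  qed
  show "(X - pinv A) * C = 0\<^sub>m n p"
  proof (rule eq_matI)
    fix i j assume i: "i < dim_row (0\<^sub>m n p :: complex mat)" and j: "j < dim_col (0\<^sub>m n p :: complex mat)"
    have XP: "X - pinv A \<in> carrier_mat n m" by (rule minus_carrier_mat[OF P(1)])
    have ij: "i < dim_row (X - pinv A)" "j < dim_col C" using XP C i j by auto
    have "((X - pinv A) * C) $$ (i, j) = ((X - pinv A) *\<^sub>v col C j) $ i"
      using ij by simp
    also have "\<dots> = 0" using zero[of j] i j by simp
    finally show "((X - pinv A) * C) $$ (i, j) = 0\<^sub>m n p $$ (i, j)" using i j by simp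
  qed (use P C in auto)
qed

lemma diff_zero_eq:
  assumes X: "X \<in> carrier_mat n m" and P: "P \<in> carrier_mat n m" and z: "X - P = 0\<^sub>m n m"
  shows "X = (P :: complex mat)"
proof (rule eq_matI)
  fix i j assume "i < dim_row P" "j < dim_col P"
  then show "X $$ (i,j) = P $$ (i,j)" using arg_cong[OF z, of "\<lambda>M. M $$ (i,j)"] X P by simp
qed (use X P in auto)

lemma part1:
  assumes A: "A \<in> carrier_mat m n" and r: "full_row_rank A" and q: "1 \<le> q"
  shows "pinv A \<in> ginv q A \<and> pinv A \<in> pginv q A \<and>
         (q \<noteq> \<infinity> \<longrightarrow> ginv q A = {pinv A} \<and> pginv q A = {pinv A})"
proof -
  note P = pinv_basic[OF A r]
  have gi: "ginvs A = {X. X \<in> carrier_mat n m \<and> A * X = 1\<^sub>m m}" using A unfolding ginvs_def by auto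
  have Pg: "pinv A \<in> ginvs A" using P gi by auto
  have one: "X * 1\<^sub>m m = X" if "X \<in> carrier_mat n m" for X :: "complex mat" using that by simp
  have g1: "pinv A \<in> ginv q A"
    unfolding ginv_def using Pg part1_C(1)[OF A r one_carrier_mat q] one P(1) gi by auto
  have g2: "pinv A \<in> pginv q A"
    unfolding pginv_def using Pg part1_C(1)[OF A r A q] gi by auto
  have g3: "ginv q A = {pinv A}" if qi: "q \<noteq> \<infinity>"
  proof
    show "{pinv A} \<subseteq> ginv q A" using g1 by auto
    show "ginv q A \<subseteq> {pinv A}"
    proof
      fix X assume "X \<in> ginv q A"
      then have X: "X \<in> carrier_mat n m" "A * X = 1\<^sub>m m" and le: "colnorm q X \<le> colnorm q (pinv A)"
        unfolding ginv_def using Pg gi by auto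
      have "(X - pinv A) * 1\<^sub>m m = 0\<^sub>m n m"
        by (rule part1_C(2)[OF A r one_carrier_mat q X qi]) (use le one X P in simp)
      then have "X - pinv A = 0\<^sub>m n m" using right_mult_one_mat[OF minus_carrier_mat[OF P(1), of X]] by simp
      then show "X \<in> {pinv A}" using diff_zero_eq[OF X(1) P(1)] by simp
    qed
  qed
  have g4: "pginv q A = {pinv A}" if qi: "q \<noteq> \<infinity>"
  proof
    show "{pinv A} \<subseteq> pginv q A" using g2 by auto
    show "pginv q A \<subseteq> {pinv A}"
    proof
      fix X assume "X \<in> pginv q A"
      then have X: "X \<in> carrier_mat n m" "A * X = 1\<^sub>m m" and le: "colnorm q (X * A) \<le> colnorm q (pinv A * A)"
        unfolding pginv_def using Pg gi by auto
      have z: "(X - pinv A) * A = 0\<^sub>m n n"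
        by (rule part1_C(2)[OF A r A q X qi le])
      obtain R where R: "R \<in> carrier_mat n m" "A * R = 1\<^sub>m m" using right_inv_exists[OF A r] by auto
      have XP: "X - pinv A \<in> carrier_mat n m" by (rule minus_carrier_mat[OF P(1)])
      have "X - pinv A = (X - pinv A) * (A * R)" using R(2) right_mult_one_mat[OF XP] by simp
      also have "\<dots> = ((X - pinv A) * A) * R" by (rule assoc_mult_mat[symmetric, OF XP A R(1)])
      also have "\<dots> = 0\<^sub>m n m" unfolding z using R by simp
      finally show "X \<in> {pinv A}" using diff_zero_eq[OF X(1) P(1)] by simp
    qed
  qed
  show ?thesis using g1 g2 g3 g4 by blast
qed




lemma sum2: "(\<Sum>k<2. f k) = f 0 + f (1::nat)" by (simp add: eval_nat_numeral)
lemma sum3: "(\<Sum>k<3. f k) = f 0 + f 1 + f (2::nat)" by (simp add: eval_nat_numeral)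
lemma lt2: "(i::nat) < 2 \<longleftrightarrow> i = 0 \<or> i = 1" by auto
lemma lt3: "(i::nat) < 3 \<longleftrightarrow> i = 0 \<or> i = 1 \<or> i = 2" by auto

lemma eq2x2:
  assumes "M \<in> carrier_mat 2 2" "N \<in> carrier_mat 2 2"
    "M $$ (0,0) = N $$ (0,0)" "M $$ (0,1) = N $$ (0,1)" "M $$ (1,0) = N $$ (1,0)" "M $$ (1,1) = N $$ (1,1)"
  shows "M = (N :: complex mat)"
proof (rule eq_matI)
  fix i j assume "i < dim_row N" "j < dim_col N"
  then have "i < 2" "j < 2" using assms by auto
  then have "(i = 0 \<or> i = 1) \<and> (j = 0 \<or> j = 1)" unfolding lt2 by blast
  then show "M $$ (i,j) = N $$ (i,j)" using assms by blast
qed (use assms in auto)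

lemma idx32:
  assumes "A \<in> carrier_mat 2 3" "Y \<in> carrier_mat 3 (p::nat)" "i < 2" "j < p"
  shows "(A * Y) $$ (i,j) = A $$ (i,0) * Y $$ (0,j) + A $$ (i,1) * Y $$ (1,j) + A $$ (i,2) * Y $$ (2,j)"
  using assms by (simp add: scalar_prod_def atLeast0LessThan sum3)

lemma idx23:
  assumes "Y \<in> carrier_mat p 2" "A \<in> carrier_mat 2 (q::nat)" "i < p" "j < q"
  shows "(Y * A) $$ (i,j) = Y $$ (i,0) * A $$ (0,j) + Y $$ (i,1) * A $$ (1,j)"
  using assms by (simp add: scalar_prod_def atLeast0LessThan sum2)

lemma idx_pinv:
  assumes "A \<in> carrier_mat 2 3" "B \<in> carrier_mat 2 2" "i < 3" "j < 2"
  shows "(adj A * B) $$ (i,j) = cnj (A $$ (0,i)) * B $$ (0,j) + cnj (A $$ (1,i)) * B $$ (1,j)"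
  using assms by (simp add: scalar_prod_def atLeast0LessThan sum2)

lemma cn3: "dim_row M = 3 \<Longrightarrow> col_norm2 M j = sqrt ((cmod (M $$ (0,j)))\<^sup>2 + (cmod (M $$ (1,j)))\<^sup>2 + (cmod (M $$ (2,j)))\<^sup>2)"
  unfolding col_norm2_def by (simp add: sum3)

lemma part2:
  fixes \<eta> :: real assumes e: "0 < \<eta>" "\<eta> < 1"
  shows "let A = mat_of_rows_list 3 [[complex_of_real (1 / \<eta>), 0, 0], [0, 1, 0]]
             in full_row_rank A \<and> (\<exists>X \<in> ginv \<infinity> A. X \<noteq> pinv A)"
proof -
  define A where "A = mat_of_rows_list 3 [[complex_of_real (1 / \<eta>), 0, 0], [0, 1, 0]]"
  define X where "X = mat_of_rows_list 2 [[complex_of_real \<eta>, 0], [0, 1], [complex_of_real (1 - \<eta>), 0]]"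
  have A: "A \<in> carrier_mat 2 3" unfolding A_def by (simp add: mat_of_rows_list_def numeral_2_eq_2 numeral_3_eq_3)
  have X: "X \<in> carrier_mat 3 2" unfolding X_def by (simp add: mat_of_rows_list_def numeral_2_eq_2 numeral_3_eq_3)
  have Ae: "A $$ (0,0) = complex_of_real (1/\<eta>)" "A $$ (0,1) = 0" "A $$ (0,2) = 0"
     "A $$ (1,0) = 0" "A $$ (1,1) = 1" "A $$ (1,2) = 0"
    unfolding A_def by (simp_all add: mat_of_rows_list_def)
  have Xe: "X $$ (0,0) = complex_of_real \<eta>" "X $$ (0,1) = 0" "X $$ (1,0) = 0"
     "X $$ (1,1) = 1" "X $$ (2,0) = complex_of_real (1 - \<eta>)" "X $$ (2,1) = 0"
    unfolding X_def by (simp_all add: mat_of_rows_list_def)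
  note Ae = Ae Ae[unfolded One_nat_def]
  note Xe = Xe Xe[unfolded One_nat_def]
  have AX: "A * X = 1\<^sub>m 2"
    by (rule eq2x2) (use A X e in \<open>simp_all add: idx32 Ae Xe of_real_mult[symmetric] del: of_real_mult index_mult_mat\<close>)
  have fr: "full_row_rank A" by (rule full_rank_from_right_inv[OF A X AX])
  have gi: "ginvs A = {Y. Y \<in> carrier_mat 3 2 \<and> A * Y = 1\<^sub>m 2}" using A unfolding ginvs_def by auto
  have Xle: "colnorm \<infinity> X \<le> 1"
  proof (rule colnorm_inf_le)
    fix j assume "j < dim_col X"
    then have j: "j = 0 \<or> j = 1" using X by auto
    have "\<eta>\<^sup>2 + (1 - \<eta>)\<^sup>2 \<le> 1" using e by (simp add: power2_eq_square algebra_simps mult_le_cancel_left1)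
    moreover have "cmod (1 - complex_of_real \<eta>) = 1 - \<eta>" using e
      by (metis of_real_1 of_real_diff norm_of_real abs_of_pos diff_gt_0_iff_gt)
    ultimately show "col_norm2 X j \<le> 1" using j X e
      by (auto simp: cn3 Xe)
  qed simp
  have Yge: "1 \<le> colnorm \<infinity> Y" if Y: "Y \<in> ginvs A" for Y
  proof -
    have Y': "Y \<in> carrier_mat 3 2" "A * Y = 1\<^sub>m 2" using Y gi by auto
    have "(A * Y) $$ (1,1) = Y $$ (1,1)" using idx32[OF A Y'(1), of 1 1] by (simp add: Ae)
    then have "Y $$ (1,1) = 1" using Y'(2) by simp
    then have "1 \<le> col_norm2 Y 1" using col_norm2_ge_entry[of 1 Y 1] Y'(1) by simp
    also have "\<dots> \<le> colnorm \<infinity> Y" using Y'(1) by (intro colnorm_inf_ge) simp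
    finally show ?thesis .
  qed
  have Xg: "X \<in> ginv \<infinity> A" unfolding ginv_def
  proof (intro CollectI conjI ballI)
    show "X \<in> ginvs A" using gi X AX by simp
    fix Y assume "Y \<in> ginvs A"
    then show "colnorm \<infinity> X \<le> colnorm \<infinity> Y" using Xle Yge[of Y] by linarith
  qed
  have Xne: "X \<noteq> pinv A"
  proof
    assume XP: "X = pinv A"
    obtain B where B: "B \<in> carrier_mat 2 2" "pinv A = adj A * B" using pinv_char[OF A fr] by auto
    have "(adj A * B) $$ (2,0) = 0" using idx_pinv[OF A B(1), of 2 0] by (simp add: Ae)
    then have "X $$ (2,0) = 0" using XP B by simp
    then show False using Xe e by simp
  qed
  show ?thesis using fr Xg Xne unfolding A_def[symmetric] Let_def by blast
qed

lemma part3: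
  "\<exists>(m::nat) (n::nat) (A::complex mat).
            A \<in> carrier_mat m n \<and> m < n \<and> full_row_rank A \<and>
            (\<exists>X \<in> pginv \<infinity> A. X \<noteq> pinv A)"
proof -
  define A :: "complex mat" where "A = mat_of_rows_list 3 [[1, 1, 0], [0, 0, 1]]"
  define X :: "complex mat" where "X = mat_of_rows_list 2 [[1, 0], [0, 0], [0, 1]]"
  have A: "A \<in> carrier_mat 2 3" unfolding A_def by (simp add: mat_of_rows_list_def numeral_2_eq_2 numeral_3_eq_3)
  have X: "X \<in> carrier_mat 3 2" unfolding X_def by (simp add: mat_of_rows_list_def numeral_2_eq_2 numeral_3_eq_3)
  have Ae: "A $$ (0,0) = 1" "A $$ (0,1) = 1" "A $$ (0,2) = 0"
     "A $$ (1,0) = 0" "A $$ (1,1) = 0" "A $$ (1,2) = 1"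
    unfolding A_def by (simp_all add: mat_of_rows_list_def)
  have Xe: "X $$ (0,0) = 1" "X $$ (0,1) = 0" "X $$ (1,0) = 0"
     "X $$ (1,1) = 0" "X $$ (2,0) = 0" "X $$ (2,1) = 1"
    unfolding X_def by (simp_all add: mat_of_rows_list_def)
  note Ae = Ae Ae[unfolded One_nat_def]
  note Xe = Xe Xe[unfolded One_nat_def]
  have AX: "A * X = 1\<^sub>m 2"
    by (rule eq2x2) (use A X in \<open>simp_all add: idx32 Ae Xe del: index_mult_mat\<close>)
  have fr: "full_row_rank A" by (rule full_rank_from_right_inv[OF A X AX])
  have gi: "ginvs A = {Y. Y \<in> carrier_mat 3 2 \<and> A * Y = 1\<^sub>m 2}" using A unfolding ginvs_def by auto
  have XA: "X * A \<in> carrier_mat 3 3" using X A by simp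
  have Xle: "colnorm \<infinity> (X * A) \<le> 1"
  proof (rule colnorm_inf_le)
    fix j assume "j < dim_col (X * A)"
    then have j: "j < 3" using XA by auto
    have e: "(X * A) $$ (i,j) = X $$ (i,0) * A $$ (0,j) + X $$ (i,1) * A $$ (1,j)" if "i < 3" for i
      using idx23[OF X A that j] .
    show "col_norm2 (X * A) j \<le> 1" using j XA X A unfolding lt3
      by (auto simp: cn3 e Xe Ae)
  qed simp
  have Yge: "1 \<le> colnorm \<infinity> (Y * A)" if Y: "Y \<in> ginvs A" for Y
  proof -
    have Y': "Y \<in> carrier_mat 3 2" "A * Y = 1\<^sub>m 2" using Y gi by auto
    have "(A * Y) $$ (1,1) = Y $$ (2,1)" using idx32[OF A Y'(1), of 1 1] by (simp add: Ae)
    then have y: "Y $$ (2,1) = 1" using Y'(2) by simp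
    have "(Y * A) $$ (2,2) = Y $$ (2,1)" using idx23[OF Y'(1) A, of 2 2] by (simp add: Ae)
    then have "1 \<le> col_norm2 (Y * A) 2" using col_norm2_ge_entry[of 2 "Y * A" 2] Y'(1) A y by simp
    also have "\<dots> \<le> colnorm \<infinity> (Y * A)" using Y'(1) A by (intro colnorm_inf_ge) simp
    finally show ?thesis .
  qed
  have Xg: "X \<in> pginv \<infinity> A" unfolding pginv_def
  proof (intro CollectI conjI ballI)
    show "X \<in> ginvs A" using gi X AX by simp
    fix Y assume "Y \<in> ginvs A"
    then show "colnorm \<infinity> (X * A) \<le> colnorm \<infinity> (Y * A)" using Xle Yge[of Y] by linarith
  qed
  have Xne: "X \<noteq> pinv A"
  proof
    assume XP: "X = pinv A"
    obtain B where B: "B \<in> carrier_mat 2 2" "pinv A = adj A * B" using pinv_char[OF A fr] by auto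
    have "(adj A * B) $$ (0,0) = B $$ (0,0)" using idx_pinv[OF A B(1), of 0 0] by (simp add: Ae)
    moreover have "(adj A * B) $$ (1,0) = B $$ (0,0)" using idx_pinv[OF A B(1), of 1 0] by (simp add: Ae)
    ultimately have "X $$ (0,0) = X $$ (1,0)" using XP B by simp
    then show False using Xe by simp
  qed
  show ?thesis using A fr Xg Xne by (intro exI[of _ 2] exI[of _ 3] exI[of _ A]) auto
qed


theorem corollary2:
  shows "(\<forall>(m::nat) (n::nat) (A::complex mat) (q::ereal).
            A \<in> carrier_mat m n \<and> m < n \<and> full_row_rank A \<and> 1 \<le> q \<longrightarrow>
              pinv A \<in> ginv q A \<and> pinv A \<in> pginv q A \<and>
              (q \<noteq> \<infinity> \<longrightarrow> ginv q A = {pinv A} \<and> pginv q A = {pinv A}))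
       \<and> (\<forall>\<eta>::real. 0 < \<eta> \<and> \<eta> < 1 \<longrightarrow>
            (let A = mat_of_rows_list 3 [[complex_of_real (1 / \<eta>), 0, 0], [0, 1, 0]]
             in full_row_rank A \<and> (\<exists>X \<in> ginv \<infinity> A. X \<noteq> pinv A)))
       \<and> (\<exists>(m::nat) (n::nat) (A::complex mat).
            A \<in> carrier_mat m n \<and> m < n \<and> full_row_rank A \<and>
            (\<exists>X \<in> pginv \<infinity> A. X \<noteq> pinv A))"
  using part1 part2 part3 by blast

end
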